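(* Let $\mathbf A$ be a finite subdirectly irreducible cBCK-algebra that is not a chain. Then the smallest set generating $\mathbf A$ is $\mathrm{m}(\mathbf A)$ (i.e., $\mathrm{m}(\mathbf A)$ generates $\mathbf A$) if and only if $\mathcal S_\delta(\mathbf A)=\emptyset$.
   Context: A BCK-algebra is an algebra $(A,\ominus,0)$ of type $(2,0)$ satisfying $((x\ominus y)\ominus(x\ominus z))\ominus(z\ominus y)=0$, $x\ominus 0=x$, $0\ominus x=0$, and ($x\ominus y=0$ and $y\ominus x=0$ imply $x=y$); it is ordered by $x\le y$ iff $x\ominus y=0$. A cBCK-algebra is a BCK-algebra satisfying $x\ominus(x\ominus y)=y\ominus(y\ominus x)$; its order is a meet-semilattice with $x\wedge y=x\ominus(x\ominus y)$. Finite subdirectly irreducible cBCK-algebras are, as posets, rooted trees with root $0$. For $a\in A$, $\mathrm{h}(a)=|[0,a]|-1$; $n=\mathrm{h}(\mathbf A)$ is the maximum height. $\mathrm{m}(\mathbf A)$ is the set of maximal elements. For $k$ a divisor of $n$ with $k\ne 1,n$, put $A_k=\{x\in A\mid k \text{ divides } \mathrm{h}(x)\}$; $\mathcal S_\delta(\mathbf A)$ is the set of subalgebras of $\mathbf A$ whose universe is of the form $A_k\cup\mathrm{m}(\mathbf A)$ for such a $k$. *)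

theory Defs
  imports Main
begin

text \<open>Algebras of type (2,0) are given by a carrier set A, a binary operation
  f (written \<ominus> in the paper) and a constant z (written 0 in the paper).\<close>

definition bck_algebra :: "'a set \<Rightarrow> ('a \<Rightarrow> 'a \<Rightarrow> 'a) \<Rightarrow> 'a \<Rightarrow> bool" where
  "bck_algebra A f z \<longleftrightarrow>
     z \<in> A \<and> (\<forall>x\<in>A. \<forall>y\<in>A. f x y \<in> A) \<and>
     (\<forall>x\<in>A. \<forall>y\<in>A. \<forall>u\<in>A. f (f (f x y) (f x u)) (f u y) = z) \<and>
     (\<forall>x\<in>A. f x z = x) \<and>
     (\<forall>x\<in>A. f z x = z) \<and>
     (\<forall>x\<in>A. \<forall>y\<in>A. f x y = z \<and> f y x = z \<longrightarrow> x = y)"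

definition cbck_algebra :: "'a set \<Rightarrow> ('a \<Rightarrow> 'a \<Rightarrow> 'a) \<Rightarrow> 'a \<Rightarrow> bool" where
  "cbck_algebra A f z \<longleftrightarrow> bck_algebra A f z \<and>
     (\<forall>x\<in>A. \<forall>y\<in>A. f x (f x y) = f y (f y x))"

definition bck_le :: "('a \<Rightarrow> 'a \<Rightarrow> 'a) \<Rightarrow> 'a \<Rightarrow> 'a \<Rightarrow> 'a \<Rightarrow> bool" where
  "bck_le f z x y \<longleftrightarrow> f x y = z"

definition is_chain_alg :: "'a set \<Rightarrow> ('a \<Rightarrow> 'a \<Rightarrow> 'a) \<Rightarrow> 'a \<Rightarrow> bool" where
  "is_chain_alg A f z \<longleftrightarrow> (\<forall>x\<in>A. \<forall>y\<in>A. bck_le f z x y \<or> bck_le f z y x)"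

definition congruence :: "'a set \<Rightarrow> ('a \<Rightarrow> 'a \<Rightarrow> 'a) \<Rightarrow> ('a \<times> 'a) set \<Rightarrow> bool" where
  "congruence A f \<theta> \<longleftrightarrow> equiv A \<theta> \<and>
     (\<forall>x1 x2 y1 y2. (x1, x2) \<in> \<theta> \<and> (y1, y2) \<in> \<theta> \<longrightarrow> (f x1 y1, f x2 y2) \<in> \<theta>)"

definition subdirectly_irreducible :: "'a set \<Rightarrow> ('a \<Rightarrow> 'a \<Rightarrow> 'a) \<Rightarrow> bool" where
  "subdirectly_irreducible A f \<longleftrightarrow> (\<exists>x\<in>A. \<exists>y\<in>A. x \<noteq> y) \<and>
     \<Inter>{\<theta>. congruence A f \<theta> \<and> \<theta> \<noteq> Id_on A} \<noteq> Id_on A"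

definition subalgebra :: "'a set \<Rightarrow> ('a \<Rightarrow> 'a \<Rightarrow> 'a) \<Rightarrow> 'a \<Rightarrow> 'a set \<Rightarrow> bool" where
  "subalgebra A f z B \<longleftrightarrow> B \<subseteq> A \<and> z \<in> B \<and> (\<forall>x\<in>B. \<forall>y\<in>B. f x y \<in> B)"

definition generated :: "'a set \<Rightarrow> ('a \<Rightarrow> 'a \<Rightarrow> 'a) \<Rightarrow> 'a \<Rightarrow> 'a set \<Rightarrow> 'a set" where
  "generated A f z G = \<Inter>{B. subalgebra A f z B \<and> G \<subseteq> B}"

definition generates :: "'a set \<Rightarrow> ('a \<Rightarrow> 'a \<Rightarrow> 'a) \<Rightarrow> 'a \<Rightarrow> 'a set \<Rightarrow> bool" where
  "generates A f z G \<longleftrightarrow> G \<subseteq> A \<and> generated A f z G = A"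

definition height :: "'a set \<Rightarrow> ('a \<Rightarrow> 'a \<Rightarrow> 'a) \<Rightarrow> 'a \<Rightarrow> 'a \<Rightarrow> nat" where
  "height A f z a = card {x \<in> A. bck_le f z z x \<and> bck_le f z x a} - 1"

definition alg_height :: "'a set \<Rightarrow> ('a \<Rightarrow> 'a \<Rightarrow> 'a) \<Rightarrow> 'a \<Rightarrow> nat" where
  "alg_height A f z = Max (height A f z ` A)"

definition maximal_elems :: "'a set \<Rightarrow> ('a \<Rightarrow> 'a \<Rightarrow> 'a) \<Rightarrow> 'a \<Rightarrow> 'a set" where
  "maximal_elems A f z = {x \<in> A. \<forall>y\<in>A. bck_le f z x y \<longrightarrow> y = x}"

definition level_set :: "'a set \<Rightarrow> ('a \<Rightarrow> 'a \<Rightarrow> 'a) \<Rightarrow> 'a \<Rightarrow> nat \<Rightarrow> 'a set" where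
  "level_set A f z k = {x \<in> A. k dvd height A f z x}"

definition S_delta :: "'a set \<Rightarrow> ('a \<Rightarrow> 'a \<Rightarrow> 'a) \<Rightarrow> 'a \<Rightarrow> 'a set set" where
  "S_delta A f z = {B. subalgebra A f z B \<and>
     (\<exists>k. k dvd alg_height A f z \<and> k \<noteq> 1 \<and> k \<noteq> alg_height A f z \<and>
          B = level_set A f z k \<union> maximal_elems A f z)}"

end

theory Submission imports Defs begin

locale cb =
  fixes A :: "'a set" and f :: "'a \<Rightarrow> 'a \<Rightarrow> 'a" (infixl "\<ominus>" 70) and z :: 'a
  assumes cbck: "cbck_algebra A f z"
begin

lemma zA: "z \<in> A" using cbck unfolding cbck_algebra_def bck_algebra_def by blast
lemma cl[simp]: "x \<in> A \<Longrightarrow> y \<in> A \<Longrightarrow> x \<ominus> y \<in> A"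
  using cbck unfolding cbck_algebra_def bck_algebra_def by blast
lemma ax1: "x \<in> A \<Longrightarrow> y \<in> A \<Longrightarrow> w \<in> A \<Longrightarrow> ((x \<ominus> y) \<ominus> (x \<ominus> w)) \<ominus> (w \<ominus> y) = z"
  using cbck unfolding cbck_algebra_def bck_algebra_def by blast
lemma ax2[simp]: "x \<in> A \<Longrightarrow> x \<ominus> z = x"
  using cbck unfolding cbck_algebra_def bck_algebra_def by blast
lemma ax3[simp]: "x \<in> A \<Longrightarrow> z \<ominus> x = z"
  using cbck unfolding cbck_algebra_def bck_algebra_def by blast
lemma antisym: "x \<in> A \<Longrightarrow> y \<in> A \<Longrightarrow> x \<ominus> y = z \<Longrightarrow> y \<ominus> x = z \<Longrightarrow> x = y"
  using cbck unfolding cbck_algebra_def bck_algebra_def by blast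
lemma comm: "x \<in> A \<Longrightarrow> y \<in> A \<Longrightarrow> x \<ominus> (x \<ominus> y) = y \<ominus> (y \<ominus> x)"
  using cbck unfolding cbck_algebra_def by blast

lemma self[simp]: "x \<in> A \<Longrightarrow> x \<ominus> x = z"
  using ax1[of x z z] zA by simp

lemma II: "x \<in> A \<Longrightarrow> y \<in> A \<Longrightarrow> (x \<ominus> (x \<ominus> y)) \<ominus> y = z"
  using ax1[of x z y] zA by simp

lemma ltrans: "x \<in> A \<Longrightarrow> y \<in> A \<Longrightarrow> w \<in> A \<Longrightarrow> x \<ominus> y = z \<Longrightarrow> y \<ominus> w = z \<Longrightarrow> x \<ominus> w = z"
  using ax1[of x w y] zA by simp

lemma anti: "x \<in> A \<Longrightarrow> y \<in> A \<Longrightarrow> w \<in> A \<Longrightarrow> y \<ominus> w = z \<Longrightarrow> (x \<ominus> w) \<ominus> (x \<ominus> y) = z"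
  using ax1[of x w y] by simp

lemma sub_le: "x \<in> A \<Longrightarrow> y \<in> A \<Longrightarrow> (x \<ominus> y) \<ominus> x = z"
  using anti[of x z y] zA by simp

lemma le_zero: "x \<in> A \<Longrightarrow> x \<ominus> z = z \<Longrightarrow> x = z" by simp

lemma exch_le: "x \<in> A \<Longrightarrow> y \<in> A \<Longrightarrow> w \<in> A \<Longrightarrow> ((x \<ominus> w) \<ominus> y) \<ominus> ((x \<ominus> y) \<ominus> w) = z"
proof -
  assume a: "x \<in> A" "y \<in> A" "w \<in> A"
  have 1: "((x \<ominus> w) \<ominus> y) \<ominus> ((x \<ominus> w) \<ominus> (x \<ominus> (x \<ominus> y))) = z"
    using anti[of "x \<ominus> w" "x \<ominus> (x \<ominus> y)" y] II[of x y] a by simp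
  have 2: "((x \<ominus> w) \<ominus> (x \<ominus> (x \<ominus> y))) \<ominus> ((x \<ominus> y) \<ominus> w) = z"
    using ax1[of x w "x \<ominus> y"] a by simp
  show ?thesis using ltrans[OF _ _ _ 1 2] a by simp
qed

lemma exch: "x \<in> A \<Longrightarrow> y \<in> A \<Longrightarrow> w \<in> A \<Longrightarrow> (x \<ominus> w) \<ominus> y = (x \<ominus> y) \<ominus> w"
  using exch_le[of x y w] exch_le[of x w y] antisym by simp

lemma L: "x \<in> A \<Longrightarrow> y \<in> A \<Longrightarrow> w \<in> A \<Longrightarrow> ((x \<ominus> w) \<ominus> (y \<ominus> w)) \<ominus> (x \<ominus> y) = z"
  using exch[of "x \<ominus> w" "x \<ominus> y" "y \<ominus> w"] ax1[of x w y] by simp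

lemma mono1: "x \<in> A \<Longrightarrow> y \<in> A \<Longrightarrow> w \<in> A \<Longrightarrow> x \<ominus> y = z \<Longrightarrow> (x \<ominus> w) \<ominus> (y \<ominus> w) = z"
  using L[of x y w] by simp

definition mt where "mt x y = x \<ominus> (x \<ominus> y)"

lemma mtA[simp]: "x \<in> A \<Longrightarrow> y \<in> A \<Longrightarrow> mt x y \<in> A" unfolding mt_def by simp
lemma mt_le1: "x \<in> A \<Longrightarrow> y \<in> A \<Longrightarrow> mt x y \<ominus> x = z" unfolding mt_def by (simp add: sub_le)
lemma mt_le2: "x \<in> A \<Longrightarrow> y \<in> A \<Longrightarrow> mt x y \<ominus> y = z" unfolding mt_def by (simp add: II)
lemma mt_comm: "x \<in> A \<Longrightarrow> y \<in> A \<Longrightarrow> mt x y = mt y x" unfolding mt_def by (simp add: comm)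
lemma inv: "x \<in> A \<Longrightarrow> y \<in> A \<Longrightarrow> y \<ominus> x = z \<Longrightarrow> x \<ominus> (x \<ominus> y) = y"
  using comm[of x y] by simp
lemma glb: "x \<in> A \<Longrightarrow> y \<in> A \<Longrightarrow> c \<in> A \<Longrightarrow> c \<ominus> x = z \<Longrightarrow> c \<ominus> y = z \<Longrightarrow> c \<ominus> mt x y = z"
proof -
  assume a: "x \<in> A" "y \<in> A" "c \<in> A" "c \<ominus> x = z" "c \<ominus> y = z"
  have "(x \<ominus> y) \<ominus> (x \<ominus> c) = z" using anti[of x c y] a by simp
  then have "(x \<ominus> (x \<ominus> c)) \<ominus> (x \<ominus> (x \<ominus> y)) = z" using anti[of x "x \<ominus> y" "x \<ominus> c"] a by simp
  moreover have "x \<ominus> (x \<ominus> c) = c" using inv a by simp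
  ultimately show ?thesis unfolding mt_def by simp
qed
lemma mt_le_eq: "x \<in> A \<Longrightarrow> y \<in> A \<Longrightarrow> y \<ominus> x = z \<Longrightarrow> mt x y = y"
  unfolding mt_def using inv by simp
lemma c1: "x \<in> A \<Longrightarrow> y \<in> A \<Longrightarrow> x \<ominus> mt x y = x \<ominus> y"
proof -
  assume a: "x \<in> A" "y \<in> A"
  have 1: "(x \<ominus> (x \<ominus> (x \<ominus> y))) \<ominus> (x \<ominus> y) = z" using II[of x "x \<ominus> y"] a by simp
  have 2: "(x \<ominus> y) \<ominus> (x \<ominus> (x \<ominus> (x \<ominus> y))) = z" using anti[of x "x \<ominus> (x \<ominus> y)" y] II[of x y] a by simp
  show ?thesis unfolding mt_def using antisym[OF _ _ 1 2] a by simp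
qed
lemma zero_meet: "t \<in> A \<Longrightarrow> y \<in> A \<Longrightarrow> mt t y = z \<Longrightarrow> t \<ominus> y = t"
  unfolding mt_def using antisym[of "t \<ominus> y" t] sub_le by simp

lemma mv: assumes A: "x \<in> A" "y1 \<in> A" "y2 \<in> A" "t \<in> A"
  and h: "y1 \<ominus> x = z" "y2 \<ominus> x = z" "t \<ominus> (y1 \<ominus> y2) = z" "t \<ominus> (y2 \<ominus> y1) = z"
  shows "t = z"
proof -
  define m where "m = mt y1 y2"
  have mA: "m \<in> A" using A m_def by simp
  have m1: "m \<ominus> y1 = z" and m2: "m \<ominus> y2 = z" using mt_le1 mt_le2 A m_def by auto
  have t1: "t \<ominus> y1 = z" using ltrans[OF _ _ _ h(3) sub_le] A by simp
  have t2: "t \<ominus> y2 = z" using ltrans[OF _ _ _ h(4) sub_le] A by simp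
  have tm: "t \<ominus> m = z" using glb t1 t2 A m_def by simp
  have e1: "y1 \<ominus> y2 = y1 \<ominus> m" using c1 A m_def by simp
  have e2: "y2 \<ominus> y1 = y2 \<ominus> m" using c1[of y2 y1] mt_comm A m_def by simp
  define c where "c = x \<ominus> m"
  have cA: "c \<in> A" using A mA c_def by simp
  have mx: "m \<ominus> x = z" using ltrans[OF _ _ _ m1 h(1)] A mA by simp
  have tc: "t \<ominus> c = z" using ltrans[OF _ _ _ h(3)[unfolded e1] mono1[OF _ _ _ h(1)]] A mA c_def by simp
  have key: "a \<ominus> (c \<ominus> t) = z" if ya: "y \<in> A" "y \<ominus> x = z" "m \<ominus> y = z" "t \<ominus> (y \<ominus> m) = z" and aa: "a = x \<ominus> y" for a y
  proof -
    have aA: "a \<in> A" using aa ya A by simp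
    have ac: "a \<ominus> c = z" using anti[of x m y] aa c_def ya A mA by simp
    have "c \<ominus> a = y \<ominus> m" using exch[of x "x \<ominus> y" m] inv[of x y] aa c_def ya A mA by simp
    then have "(c \<ominus> (c \<ominus> a)) \<ominus> (c \<ominus> t) = z" using anti[of c t "c \<ominus> a"] ya aA cA A mA by simp
    then show ?thesis using inv[OF cA aA ac] by simp
  qed
  define q where "q = x \<ominus> (c \<ominus> t)"
  have ctA: "c \<ominus> t \<in> A" using cA A by simp
  have qy: "q \<ominus> y = z" if ya: "y \<in> A" "y \<ominus> x = z" "m \<ominus> y = z" "t \<ominus> (y \<ominus> m) = z" for y
  proof -
    have "(x \<ominus> (c \<ominus> t)) \<ominus> (x \<ominus> (x \<ominus> y)) = z"
      using anti[of x "x \<ominus> y" "c \<ominus> t"] key[OF ya refl] ya ctA A by simp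
    then show ?thesis using inv[of x y] ya A q_def by simp
  qed
  have qA: "q \<in> A" using q_def ctA A by simp
  have h3: "t \<ominus> (y1 \<ominus> m) = z" using h(3) e1 by simp
  have h4: "t \<ominus> (y2 \<ominus> m) = z" using h(4) e2 by simp
  have qm: "q \<ominus> m = z" using glb[OF _ _ qA qy[OF A(2) h(1) m1 h3] qy[OF A(3) h(2) m2 h4]] A m_def by simp
  have ctx: "(c \<ominus> t) \<ominus> x = z" using ltrans[OF ctA cA A(1) sub_le[of c t] sub_le[of x m, folded c_def]] A mA cA by simp
  have "(x \<ominus> m) \<ominus> (x \<ominus> q) = z" using anti[OF A(1) qA mA qm] .
  then have cc: "c \<ominus> (c \<ominus> t) = z" using inv[OF A(1) ctA ctx] q_def c_def by simp
  have "c \<ominus> (c \<ominus> t) = t" using inv[OF cA A(4) tc] .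
  then show ?thesis using cc by simp
qed

definition ideal where "ideal I \<longleftrightarrow> I \<subseteq> A \<and> z \<in> I \<and> (\<forall>x\<in>A. \<forall>y\<in>A. x \<ominus> y \<in> I \<and> y \<in> I \<longrightarrow> x \<in> I)"
definition cg where "cg I = {(x,y). x \<in> A \<and> y \<in> A \<and> x \<ominus> y \<in> I \<and> y \<ominus> x \<in> I}"

lemma ideal_r: "ideal I \<Longrightarrow> x \<in> A \<Longrightarrow> y \<in> A \<Longrightarrow> x \<ominus> y \<in> I \<Longrightarrow> y \<in> I \<Longrightarrow> x \<in> I"
  unfolding ideal_def by blast
lemma ideal_z: "ideal I \<Longrightarrow> z \<in> I" unfolding ideal_def by blast
lemma ideal_A: "ideal I \<Longrightarrow> y \<in> I \<Longrightarrow> y \<in> A" unfolding ideal_def by blast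

lemma ideal_down: assumes I: "ideal I" and h: "x \<in> A" "y \<in> I" "x \<ominus> y = z" shows "x \<in> I"
proof -
  have "x \<ominus> y \<in> I" using h(3) ideal_z[OF I] by simp
  then show ?thesis using ideal_r[OF I h(1) ideal_A[OF I h(2)] _ h(2)] by blast
qed

lemma ideal_trans: assumes I: "ideal I" and A: "a \<in> A" "b \<in> A" "c \<in> A" and h: "a \<ominus> b \<in> I" "b \<ominus> c \<in> I"
  shows "a \<ominus> c \<in> I"
proof -
  have 1: "(a \<ominus> c) \<ominus> (a \<ominus> b) \<in> I" using ideal_down[OF I _ h(2)] ax1[of a c b] A by simp
  show ?thesis using ideal_r[OF I _ _ 1 h(1)] A by simp
qed

lemma cg_mem: "(x, y) \<in> cg I \<longleftrightarrow> x \<in> A \<and> y \<in> A \<and> x \<ominus> y \<in> I \<and> y \<ominus> x \<in> I"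
  unfolding cg_def by simp

lemma cg_cong: assumes I: "ideal I" shows "congruence A f (cg I)"
  unfolding congruence_def
proof (intro conjI allI impI)
  show "equiv A (cg I)"
  proof (rule equivI)
    show "cg I \<subseteq> A \<times> A" using cg_mem by auto
    have "z \<in> I" using I unfolding ideal_def by blast
    then show "refl_on A (cg I)" unfolding refl_on_def using cg_mem by simp
    show "sym (cg I)" by (rule symI) (simp add: cg_mem)
    show "trans (cg I)"
    proof (rule transI)
      fix x y w assume "(x, y) \<in> cg I" "(y, w) \<in> cg I"
      then have a: "x \<in> A" "y \<in> A" "w \<in> A" "x \<ominus> y \<in> I" "y \<ominus> x \<in> I" "y \<ominus> w \<in> I" "w \<ominus> y \<in> I"
        unfolding cg_mem by auto
      show "(x, w) \<in> cg I" unfolding cg_mem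
        using ideal_trans[OF I a(1,2,3) a(4,6)] ideal_trans[OF I a(3,2,1) a(7,5)] a(1,3) by blast
    qed
  qed
next
  fix x1 x2 y1 y2 assume h: "(x1, x2) \<in> cg I \<and> (y1, y2) \<in> cg I"
  then have A: "x1 \<in> A" "x2 \<in> A" "y1 \<in> A" "y2 \<in> A" and
    i: "x1 \<ominus> x2 \<in> I" "x2 \<ominus> x1 \<in> I" "y1 \<ominus> y2 \<in> I" "y2 \<ominus> y1 \<in> I" unfolding cg_mem by auto
  have 1: "(x1 \<ominus> y1) \<ominus> (x2 \<ominus> y1) \<in> I" using ideal_down[OF I _ i(1) L[OF A(1,2,3)]] A by simp
  have 2: "(x2 \<ominus> y1) \<ominus> (x2 \<ominus> y2) \<in> I" using ideal_down[OF I _ i(4) ax1[OF A(2,3,4)]] A by simp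
  have 3: "(x2 \<ominus> y1) \<ominus> (x1 \<ominus> y1) \<in> I" using ideal_down[OF I _ i(2) L[OF A(2,1,3)]] A by simp
  have 4: "(x2 \<ominus> y2) \<ominus> (x2 \<ominus> y1) \<in> I" using ideal_down[OF I _ i(3) ax1[OF A(2,4,3)]] A by simp
  have A': "x1 \<ominus> y1 \<in> A" "x2 \<ominus> y1 \<in> A" "x2 \<ominus> y2 \<in> A" using A by auto
  show "(x1 \<ominus> y1, x2 \<ominus> y2) \<in> cg I" unfolding cg_mem
    using ideal_trans[OF I A'(1,2,3) 1 2] ideal_trans[OF I A'(3,2,1) 4 3] A' by blast
qed

definition pol where "pol S = {x \<in> A. \<forall>s\<in>S. mt x s = z}"

lemma pol_ideal: assumes S: "S \<subseteq> A" shows "ideal (pol S)"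
  unfolding ideal_def
proof (intro conjI ballI impI)
  show "pol S \<subseteq> A" unfolding pol_def by auto
  show "z \<in> pol S" unfolding pol_def mt_def using zA S by auto
next
  fix x y assume A: "x \<in> A" "y \<in> A" and h: "x \<ominus> y \<in> pol S \<and> y \<in> pol S"
  show "x \<in> pol S" unfolding pol_def
  proof (intro CollectI conjI ballI A)
    fix s assume s: "s \<in> S"
    then have sA: "s \<in> A" using S by auto
    have h1: "mt (x \<ominus> y) s = z" "mt y s = z" using h s unfolding pol_def by auto
    define t where "t = mt x s"
    have tA: "t \<in> A" using t_def A sA by simp
    have tx: "t \<ominus> x = z" and ts: "t \<ominus> s = z" unfolding t_def using mt_le1[OF A(1) sA] mt_le2[OF A(1) sA] by auto
    have "mt t y \<ominus> s = z" using ltrans[OF _ tA sA mt_le1 ts] tA A by simp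
    then have "mt t y \<ominus> mt y s = z" using glb[OF A(2) sA _ mt_le2] tA A by simp
    then have "mt t y = z" using h1 tA A by simp
    then have "t \<ominus> y = t" using zero_meet tA A by simp
    then have "t \<ominus> (x \<ominus> y) = z" using mono1[OF tA A(1) A(2) tx] by simp
    then have "t \<ominus> mt (x \<ominus> y) s = z" using glb[OF _ sA tA _ ts] A by simp
    then show "mt x s = z" using h1 tA t_def by simp
  qed
qed

end

locale si = cb +
  assumes SI: "subdirectly_irreducible A f"
begin

lemma F4: assumes A: "a \<in> A" "b \<in> A" and nz: "a \<noteq> z" "b \<noteq> z" shows "mt a b \<noteq> z"
proof
  assume ab: "mt a b = z"
  define P where "P = pol {b}"
  define Q where "Q = pol P"
  have PA: "P \<subseteq> A" unfolding P_def pol_def by auto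
  have IP: "ideal P" unfolding P_def using pol_ideal A by simp
  have IQ: "ideal Q" unfolding Q_def using pol_ideal PA by simp
  have aP: "a \<in> P" unfolding P_def pol_def using A ab by simp
  have bQ: "b \<in> Q" unfolding Q_def P_def pol_def using A mt_comm[of b] by (auto simp del: ax2 ax3)
  have PQ: "x = z" if "x \<in> P" "x \<in> Q" for x
    using that unfolding Q_def pol_def mt_def by auto
  have ne: "cg I \<noteq> Id_on A" if "ideal I" "c \<in> I" "c \<noteq> z" for I c
  proof
    assume e: "cg I = Id_on A"
    have "c \<in> A" using that unfolding ideal_def by auto
    then have "(c, z) \<in> cg I" unfolding cg_def using that zA unfolding ideal_def by auto
    then show False using e that by auto
  qed
  have inter: "cg P \<inter> cg Q \<subseteq> Id_on A"
  proof
    fix p assume "p \<in> cg P \<inter> cg Q"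
    then obtain x y where p: "p = (x,y)" "x \<in> A" "y \<in> A" "x \<ominus> y \<in> P" "x \<ominus> y \<in> Q" "y \<ominus> x \<in> P" "y \<ominus> x \<in> Q"
      unfolding cg_def by auto
    then have "x \<ominus> y = z" "y \<ominus> x = z" using PQ by auto
    then have "x = y" using antisym p by simp
    then show "p \<in> Id_on A" using p by auto
  qed
  let ?F = "{\<theta>. congruence A f \<theta> \<and> \<theta> \<noteq> Id_on A}"
  have m1: "cg P \<in> ?F" using cg_cong[OF IP] ne[OF IP aP nz(1)] by simp
  have m2: "cg Q \<in> ?F" using cg_cong[OF IQ] ne[OF IQ bQ nz(2)] by simp
  have "\<Inter>?F \<subseteq> cg P \<inter> cg Q" using m1 m2 by (intro Int_greatest Inter_lower)
  then have "\<Inter>?F \<subseteq> Id_on A" using inter by (rule subset_trans)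
  moreover have "Id_on A \<subseteq> \<Inter>?F"
  proof (rule Inter_greatest)
    fix T assume "T \<in> ?F"
    then have "refl_on A T" unfolding congruence_def equiv_def by blast
    then show "Id_on A \<subseteq> T" unfolding refl_on_def by auto
  qed
  ultimately have e: "\<Inter>?F = Id_on A" by (rule subset_antisym)
  have "\<Inter>?F \<noteq> Id_on A" using SI unfolding subdirectly_irreducible_def by (elim conjE)
  then show False using e by (rule notE)
qed

lemma F1: assumes A: "x \<in> A" "y1 \<in> A" "y2 \<in> A" and h: "y1 \<ominus> x = z" "y2 \<ominus> x = z"
  shows "y1 \<ominus> y2 = z \<or> y2 \<ominus> y1 = z"
proof (rule ccontr)
  assume n: "\<not> (y1 \<ominus> y2 = z \<or> y2 \<ominus> y1 = z)"
  define t where "t = mt (y1 \<ominus> y2) (y2 \<ominus> y1)"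
  have tA: "t \<in> A" using t_def A by simp
  have l1: "t \<ominus> (y1 \<ominus> y2) = z" unfolding t_def using mt_le1 A by simp
  have l2: "t \<ominus> (y2 \<ominus> y1) = z" unfolding t_def using mt_le2 A by simp
  have "t = z" using mv[OF A tA h l1 l2] .
  then show False using F4[of "y1 \<ominus> y2" "y2 \<ominus> y1"] n A t_def by simp
qed

end

locale fsi = si +
  assumes fin: "finite A"
begin

definition D where "D x = {y \<in> A. y \<ominus> x = z}"
abbreviation h where "h \<equiv> height A (\<ominus>) z"

lemma hD: "h x = card (D x) - 1"
proof -
  have "{y \<in> A. bck_le (\<ominus>) z z y \<and> bck_le (\<ominus>) z y x} = D x"
    unfolding D_def bck_le_def
  proof (rule Collect_cong)
    fix y show "(y \<in> A \<and> z \<ominus> y = z \<and> y \<ominus> x = z) = (y \<in> A \<and> y \<ominus> x = z)"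
      by (cases "y \<in> A") simp_all
  qed
  then show ?thesis unfolding height_def by simp
qed

lemma finD: "finite (D x)" unfolding D_def using fin by auto
lemma xD: "x \<in> A \<Longrightarrow> x \<in> D x" unfolding D_def by simp
lemma zD: "x \<in> A \<Longrightarrow> z \<in> D x" unfolding D_def using zA by simp
lemma DA: "D x \<subseteq> A" unfolding D_def by auto
lemma cardD: "x \<in> A \<Longrightarrow> card (D x) \<ge> 1"
  using xD finD by (metis One_nat_def Suc_leI card_gt_0_iff empty_iff)
lemma D_mono: assumes "x \<in> A" "y \<in> A" "y \<ominus> x = z" shows "D y \<subseteq> D x"
proof
  fix t assume "t \<in> D y"
  then show "t \<in> D x" using ltrans[of t y x] assms unfolding D_def by simp
qed

lemma h_mono: "x \<in> A \<Longrightarrow> y \<in> A \<Longrightarrow> y \<ominus> x = z \<Longrightarrow> h y \<le> h x"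
  unfolding hD using D_mono finD card_mono diff_le_mono by metis

lemma h_lt: assumes "x \<in> A" "y \<in> A" "y \<ominus> x = z" "y \<noteq> x" shows "h y < h x"
proof -
  have "D y \<subseteq> D x" using D_mono assms by simp
  moreover have "x \<notin> D y" unfolding D_def using antisym assms by auto
  moreover have "x \<in> D x" using xD assms by simp
  ultimately have "D y \<subset> D x" by blast
  then have "card (D y) < card (D x)" using finD psubset_card_mono by blast
  then show ?thesis unfolding hD using cardD assms by (metis diff_less_mono)
qed

lemma h_eq: "x \<in> A \<Longrightarrow> y \<in> A \<Longrightarrow> y \<ominus> x = z \<Longrightarrow> h y = h x \<Longrightarrow> y = x"
  using h_lt by fastforce

lemma Dz: "D z = {z}" unfolding D_def using zA by auto

lemma h0: "x \<in> A \<Longrightarrow> h x = 0 \<longleftrightarrow> x = z"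
proof
  assume x: "x \<in> A" "h x = 0"
  show "x = z"
  proof (rule ccontr)
    assume "x \<noteq> z"
    then have "h z < h x" using h_lt[OF x(1) zA] x by simp
    then show False using x by simp
  qed
qed (simp add: hD Dz)

lemma F2: assumes A: "x \<in> A" "s \<in> A" and sx: "s \<ominus> x = z" shows "h (x \<ominus> s) = h x - h s"
proof -
  define U where "U = {t \<in> D x. s \<ominus> t = z}"
  define V where "V = {t \<in> D x. s \<ominus> t \<noteq> z}"
  have UV: "D x = U \<union> V" "U \<inter> V = {}" unfolding U_def V_def by auto
  have fU: "finite U" "finite V" unfolding U_def V_def using finD[of x] by auto
  have cx: "card (D x) = card U + card V" unfolding UV(1) by (rule card_Un_disjoint[OF fU UV(2)])
  have V: "V = D s - {s}"
  proof
    show "V \<subseteq> D s - {s}"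
    proof
      fix t assume t: "t \<in> V"
      then have tA: "t \<in> A" "t \<ominus> x = z" "s \<ominus> t \<noteq> z" unfolding V_def D_def by auto
      then have "t \<ominus> s = z" using F1[OF A(1) tA(1) A(2) tA(2) sx] by simp
      then show "t \<in> D s - {s}" using tA A unfolding D_def by auto
    qed
    show "D s - {s} \<subseteq> V"
    proof
      fix t assume t: "t \<in> D s - {s}"
      then have tA: "t \<in> A" "t \<ominus> s = z" "t \<noteq> s" unfolding D_def by auto
      have "t \<ominus> x = z" using ltrans[OF tA(1) A(2) A(1) tA(2) sx] .
      moreover have "s \<ominus> t \<noteq> z" using antisym[OF tA(1) A(2) tA(2)] tA(3) by auto
      ultimately show "t \<in> V" unfolding V_def D_def using tA by auto
    qed
  qed
  have cV: "card V = card (D s) - 1" unfolding V using finD xD[OF A(2)] by (simp only: card_Diff_singleton)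
  have xsA: "x \<ominus> s \<in> A" using A by simp
  have img: "(\<lambda>t. x \<ominus> t) ` U = D (x \<ominus> s)"
  proof
    show "(\<lambda>t. x \<ominus> t) ` U \<subseteq> D (x \<ominus> s)"
    proof
      fix u assume "u \<in> (\<lambda>t. x \<ominus> t) ` U"
      then obtain t where t: "t \<in> U" "u = x \<ominus> t" by blast
      then have tA: "t \<in> A" "s \<ominus> t = z" unfolding U_def D_def by auto
      show "u \<in> D (x \<ominus> s)" unfolding D_def using anti[OF A(1) A(2) tA(1) tA(2)] t(2) tA A by simp
    qed
    show "D (x \<ominus> s) \<subseteq> (\<lambda>t. x \<ominus> t) ` U"
    proof
      fix u assume "u \<in> D (x \<ominus> s)"
      then have uA: "u \<in> A" "u \<ominus> (x \<ominus> s) = z" unfolding D_def by auto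
      have ux: "u \<ominus> x = z" using ltrans[OF uA(1) xsA A(1) uA(2) sub_le[OF A]] .
      have "(x \<ominus> (x \<ominus> s)) \<ominus> (x \<ominus> u) = z" using anti[OF A(1) uA(1) xsA uA(2)] .
      then have st: "s \<ominus> (x \<ominus> u) = z" using inv[OF A(1) A(2) sx] by simp
      have "x \<ominus> u \<in> U" unfolding U_def D_def using st sub_le[OF A(1) uA(1)] A uA by simp
      moreover have "u = x \<ominus> (x \<ominus> u)" using inv[OF A(1) uA(1) ux] by simp
      ultimately show "u \<in> (\<lambda>t. x \<ominus> t) ` U" by blast
    qed
  qed
  have inj: "inj_on (\<lambda>t. x \<ominus> t) U"
  proof (rule inj_onI)
    fix t1 t2 assume "t1 \<in> U" "t2 \<in> U" "x \<ominus> t1 = x \<ominus> t2"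
    then have "t1 \<in> A" "t2 \<in> A" "t1 \<ominus> x = z" "t2 \<ominus> x = z" "x \<ominus> t1 = x \<ominus> t2" unfolding U_def D_def by auto
    then show "t1 = t2" using inv[OF A(1), of t1] inv[OF A(1), of t2] by metis
  qed
  have cU: "card (D (x \<ominus> s)) = card U" using card_image[OF inj] img by simp
  have "x \<in> U" unfolding U_def D_def using A sx by simp
  then have "card U \<ge> 1" using fU by (metis One_nat_def Suc_leI card_gt_0_iff empty_iff)
  moreover have "card (D s) \<ge> 1" using cardD A by simp
  ultimately show ?thesis unfolding hD cU cx cV by linarith
qed


lemma gen_sub: assumes G: "G \<subseteq> A"
  shows "subalgebra A (\<ominus>) z (generated A (\<ominus>) z G)" "G \<subseteq> generated A (\<ominus>) z G"
proof -
  let ?F = "{B. subalgebra A (\<ominus>) z B \<and> G \<subseteq> B}"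
  have AF: "A \<in> ?F" using G zA unfolding subalgebra_def by auto
  show "G \<subseteq> generated A (\<ominus>) z G" unfolding generated_def by blast
  have "\<Inter>?F \<subseteq> A" using AF by blast
  moreover have "z \<in> \<Inter>?F" unfolding subalgebra_def by blast
  moreover have "\<forall>x\<in>\<Inter>?F. \<forall>y\<in>\<Inter>?F. x \<ominus> y \<in> \<Inter>?F" unfolding subalgebra_def by blast
  ultimately show "subalgebra A (\<ominus>) z (generated A (\<ominus>) z G)" unfolding generated_def subalgebra_def by blast
qed

lemma gen_least: "subalgebra A (\<ominus>) z B \<Longrightarrow> G \<subseteq> B \<Longrightarrow> generated A (\<ominus>) z G \<subseteq> B"
  unfolding generated_def by blast

lemma nontriv: "\<exists>x\<in>A. x \<noteq> z"
  using SI unfolding subdirectly_irreducible_def by metis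

lemma M_A: "maximal_elems A (\<ominus>) z \<subseteq> A" unfolding maximal_elems_def by auto

lemma M_max: "m \<in> maximal_elems A (\<ominus>) z \<Longrightarrow> y \<in> A \<Longrightarrow> m \<ominus> y = z \<Longrightarrow> y = m"
  unfolding maximal_elems_def bck_le_def by blast

lemma M_nz: assumes "m \<in> maximal_elems A (\<ominus>) z" shows "m \<noteq> z"
proof
  assume mz: "m = z"
  obtain x where "x \<in> A" "x \<noteq> z" using nontriv by blast
  then show False using M_max[OF assms, of x] mz by simp
qed

lemma exists_max: assumes xA: "x \<in> A" shows "\<exists>m\<in>maximal_elems A (\<ominus>) z. x \<ominus> m = z"
proof -
  define T where "T = {y \<in> A. x \<ominus> y = z}"
  have fT: "finite T" unfolding T_def using fin by auto
  have xT: "x \<in> T" unfolding T_def using xA by simp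
  have "Max (h ` T) \<in> h ` T" using fT xT by (intro Max_in) auto
  then obtain m where mT: "m \<in> T" and hm: "h m = Max (h ` T)" by auto
  have le: "h y \<le> h m" if "y \<in> T" for y using fT that hm by simp
  have mA: "m \<in> A" and xm: "x \<ominus> m = z" using mT unfolding T_def by auto
  have "m \<in> maximal_elems A (\<ominus>) z" unfolding maximal_elems_def bck_le_def
  proof (intro CollectI conjI ballI impI mA)
    fix y assume y: "y \<in> A" "m \<ominus> y = z"
    then have "y \<in> T" unfolding T_def using ltrans[OF xA mA y(1) xm y(2)] by simp
    then have "h y \<le> h m" by (rule le)
    then show "y = m" using h_lt[OF y(1) mA y(2)] by fastforce
  qed
  then show ?thesis using xm by blast
qed

lemma alg_h: "x \<in> A \<Longrightarrow> h x \<le> alg_height A (\<ominus>) z"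
  unfolding alg_height_def using fin by simp

lemma alg_h_max: "\<exists>m\<in>maximal_elems A (\<ominus>) z. h m = alg_height A (\<ominus>) z"
proof -
  have "alg_height A (\<ominus>) z \<in> h ` A" unfolding alg_height_def using fin zA by (intro Max_in) auto
  then obtain m0 where m0: "m0 \<in> A" "h m0 = alg_height A (\<ominus>) z" by auto
  obtain m where m: "m \<in> maximal_elems A (\<ominus>) z" "m0 \<ominus> m = z" using exists_max[OF m0(1)] by blast
  have mA: "m \<in> A" using m M_A by auto
  have "h m0 \<le> h m" using h_mono[OF mA m0(1) m(2)] .
  moreover have "h m \<le> alg_height A (\<ominus>) z" using alg_h mA by simp
  ultimately show ?thesis using m m0 by force
qed

end

lemma dvd_gap: assumes "(g::nat) dvd a" "g dvd b" "a < b" "b < a + g" shows False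
proof -
  obtain i j where ij: "a = g * i" "b = g * j" using assms by (auto elim!: dvdE)
  have "i < j" using assms(3) ij by (metis mult_less_cancel1)
  then have "g * (i + 1) \<le> g * j" by (intro mult_le_mono2) simp
  then show False using assms(4) ij by simp
qed

context fsi
begin

lemma dir2: assumes SD: "S_delta A (\<ominus>) z = {}" and nc: "\<not> is_chain_alg A (\<ominus>) z"
  shows "generated A (\<ominus>) z (maximal_elems A (\<ominus>) z) = A"
proof -
  let ?M = "maximal_elems A (\<ominus>) z"
  let ?S = "generated A (\<ominus>) z ?M"
  have sub: "subalgebra A (\<ominus>) z ?S" and MS: "?M \<subseteq> ?S" using gen_sub[OF M_A] by auto
  have SA: "?S \<subseteq> A" and zS: "z \<in> ?S" and clS: "\<And>x y. x \<in> ?S \<Longrightarrow> y \<in> ?S \<Longrightarrow> x \<ominus> y \<in> ?S"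
    using sub unfolding subalgebra_def by auto
  obtain m1 where m1: "m1 \<in> ?M" using exists_max[OF zA] by blast
  have ne: "m1 \<in> ?S - {z}" using m1 MS M_nz by auto
  have finS: "finite (?S - {z})" using SA fin by (meson finite_Diff finite_subset)
  define g where "g = Min (h ` (?S - {z}))"
  have "g \<in> h ` (?S - {z})" unfolding g_def using finS ne by (intro Min_in) auto
  then obtain s where s: "s \<in> ?S" "s \<noteq> z" "h s = g" by auto
  have gmin: "g \<le> h x" if "x \<in> ?S" "x \<noteq> z" for x
    unfolding g_def using finS that by (intro Min_le) auto
  have sA: "s \<in> A" using s SA by auto
  have gpos: "g > 0" using h0[OF sA] s by simp
  have a: "s \<ominus> x = z" if x: "x \<in> ?S" "x \<noteq> z" for x
  proof -
    have xA: "x \<in> A" using x SA by auto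
    define w where "w = mt x s"
    have wS: "w \<in> ?S" unfolding w_def mt_def using clS x(1) s(1) by blast
    have wA: "w \<in> A" using wS SA by auto
    have wz: "w \<noteq> z" unfolding w_def using F4[OF xA sA x(2) s(2)] .
    have ws: "w \<ominus> s = z" unfolding w_def using mt_le2[OF xA sA] .
    have "w = s"
    proof (rule ccontr)
      assume "w \<noteq> s"
      then have "h w < h s" using h_lt[OF sA wA ws] by simp
      then show False using gmin[OF wS wz] s by simp
    qed
    then show ?thesis using mt_le1[OF xA sA] unfolding w_def by simp
  qed
  have b: "g dvd h x" if "x \<in> ?S" for x
    using that
  proof (induction "h x" arbitrary: x rule: less_induct)
    case less
    show ?case
    proof (cases "x = z")
      case True then show ?thesis using h0[OF zA] by simp
    next
      case False
      have xA: "x \<in> A" using less.prems SA by auto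
      have sx: "s \<ominus> x = z" using a[OF less.prems False] .
      have x'S: "x \<ominus> s \<in> ?S" using clS less.prems s(1) by blast
      have hx': "h (x \<ominus> s) = h x - g" using F2[OF xA sA sx] s(3) by simp
      have "g \<le> h x" using gmin[OF less.prems False] .
      then have "h (x \<ominus> s) < h x" using hx' gpos by simp
      then have "g dvd h (x \<ominus> s)" using less.hyps x'S by blast
      then have "g dvd h (x \<ominus> s) + g" by simp
      then show ?thesis using hx' \<open>g \<le> h x\<close> by simp
    qed
  qed
  have c: "y \<in> ?S" if "w \<in> ?S" "y \<in> A" "y \<ominus> w = z" "g dvd h y" for w y
    using that
  proof (induction "h w" arbitrary: w rule: less_induct)
    case less
    show ?case
    proof (cases "y = w")
      case True then show ?thesis using less.prems by simp
    next
      case yw: False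
      have wA: "w \<in> A" using less.prems SA by auto
      have wz: "w \<noteq> z"
      proof
        assume "w = z" then have "y = z" using less.prems by simp
        then show False using yw \<open>w = z\<close> by simp
      qed
      have sw: "s \<ominus> w = z" using a[OF less.prems(1) wz] .
      have w'S: "w \<ominus> s \<in> ?S" using clS less.prems(1) s(1) by blast
      have w'A: "w \<ominus> s \<in> A" using wA sA by simp
      have hw': "h (w \<ominus> s) = h w - g" using F2[OF wA sA sw] s(3) by simp
      have gw: "g \<le> h w" using gmin[OF less.prems(1) wz] .
      have lt: "h (w \<ominus> s) < h w" using hw' gw gpos by simp
      have "y \<ominus> (w \<ominus> s) = z \<or> (w \<ominus> s) \<ominus> y = z"
        using F1[OF wA less.prems(2) w'A less.prems(3) sub_le[OF wA sA]] .
      then show ?thesis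
      proof
        assume "y \<ominus> (w \<ominus> s) = z"
        then show ?thesis using less.hyps[OF lt w'S less.prems(2) _ less.prems(4)] by blast
      next
        assume w'y: "(w \<ominus> s) \<ominus> y = z"
        show ?thesis
        proof (cases "y = w \<ominus> s")
          case True then show ?thesis using w'S by simp
        next
          case False
          have 1: "h (w \<ominus> s) < h y" using h_lt[OF less.prems(2) w'A w'y] False by simp
          have 2: "h y < h w" using h_lt[OF wA less.prems(2) less.prems(3) yw] .
          have "g dvd h (w \<ominus> s)" using b[OF w'S] .
          then have False using dvd_gap[OF _ less.prems(4) 1] 2 hw' gw by simp
          then show ?thesis ..
        qed
      qed
    qed
  qed
  have eq: "?S = {x \<in> A. g dvd h x}"
  proof
    show "?S \<subseteq> {x \<in> A. g dvd h x}" using SA b by auto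
    show "{x \<in> A. g dvd h x} \<subseteq> ?S"
    proof
      fix x assume x: "x \<in> {x \<in> A. g dvd h x}"
      then obtain m where m: "m \<in> ?M" "x \<ominus> m = z" using exists_max by blast
      show "x \<in> ?S" using c[of m x] m MS x by auto
    qed
  qed
  show ?thesis
  proof (rule ccontr)
    assume neA: "?S \<noteq> A"
    have g1: "g \<noteq> 1" using eq neA SA by auto
    let ?n = "alg_height A (\<ominus>) z"
    obtain m0 where m0: "m0 \<in> ?M" "h m0 = ?n" using alg_h_max by blast
    have gn: "g dvd ?n" using b[of m0] m0 MS by auto
    obtain u v where uv: "u \<in> A" "v \<in> A" "u \<ominus> v \<noteq> z" "v \<ominus> u \<noteq> z"
      using nc unfolding is_chain_alg_def bck_le_def by blast
    obtain mu where mu: "mu \<in> ?M" "u \<ominus> mu = z" using exists_max[OF uv(1)] by blast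
    obtain mv where mv: "mv \<in> ?M" "v \<ominus> mv = z" using exists_max[OF uv(2)] by blast
    have muA: "mu \<in> A" and mvA: "mv \<in> A" using mu mv M_A by auto
    have "mu \<noteq> mv"
    proof
      assume "mu = mv"
      then show False using F1[OF muA uv(1) uv(2) mu(2)] mv(2) uv by simp
    qed
    define w where "w = mt mu mv"
    have wS: "w \<in> ?S" unfolding w_def mt_def using clS MS mu(1) mv(1) by blast
    have wA: "w \<in> A" unfolding w_def using muA mvA by simp
    have wz: "w \<noteq> z" unfolding w_def using F4[OF muA mvA M_nz[OF mu(1)] M_nz[OF mv(1)]] .
    have wmu: "w \<ominus> mu = z" unfolding w_def using mt_le1[OF muA mvA] .
    have "w \<noteq> mu"
    proof
      assume "w = mu"
      then have "mu \<ominus> mv = z" using mt_le2[OF muA mvA] unfolding w_def by simp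
      then show False using M_max[OF mu(1) mvA] \<open>mu \<noteq> mv\<close> by simp
    qed
    then have "h w < h mu" using h_lt[OF muA wA wmu] by simp
    moreover have "h mu \<le> ?n" using alg_h[OF muA] .
    moreover have "g \<le> h w" using gmin[OF wS wz] .
    ultimately have gn': "g \<noteq> ?n" by simp
    have "level_set A (\<ominus>) z g \<union> ?M = ?S" unfolding level_set_def using eq MS by auto
    then have "?S \<in> S_delta A (\<ominus>) z" unfolding S_delta_def using sub gn g1 gn' by blast
    then show False using SD by simp
  qed
qed

lemma dir2b: assumes G: "generates A (\<ominus>) z G" shows "maximal_elems A (\<ominus>) z \<subseteq> G"
proof
  fix m assume m: "m \<in> maximal_elems A (\<ominus>) z"
  have mA: "m \<in> A" using m M_A by auto
  show "m \<in> G"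
  proof (rule ccontr)
    assume mG: "m \<notin> G"
    have "subalgebra A (\<ominus>) z (A - {m})" unfolding subalgebra_def
    proof (intro conjI ballI)
      show "A - {m} \<subseteq> A" by auto
      show "z \<in> A - {m}" using zA M_nz[OF m] by auto
    next
      fix x y assume x: "x \<in> A - {m}" and y: "y \<in> A - {m}"
      have "x \<ominus> y \<noteq> m"
      proof
        assume "x \<ominus> y = m"
        then have "m \<ominus> x = z" using sub_le[of x y] x y by auto
        then have "x = m" using M_max[OF m] x by auto
        then show False using x by simp
      qed
      then show "x \<ominus> y \<in> A - {m}" using x y by auto
    qed
    moreover have "G \<subseteq> A - {m}" using G mG unfolding generates_def by auto
    ultimately have "generated A (\<ominus>) z G \<subseteq> A - {m}" by (rule gen_least)
    then show False using G mA unfolding generates_def by auto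
  qed
qed

lemma dir1: assumes gen: "generated A (\<ominus>) z (maximal_elems A (\<ominus>) z) = A"
  shows "S_delta A (\<ominus>) z = {}"
proof (rule ccontr)
  let ?M = "maximal_elems A (\<ominus>) z"
  let ?n = "alg_height A (\<ominus>) z"
  assume "S_delta A (\<ominus>) z \<noteq> {}"
  then obtain B k where B: "subalgebra A (\<ominus>) z B" "k dvd ?n" "k \<noteq> 1" "k \<noteq> ?n"
    "B = level_set A (\<ominus>) z k \<union> ?M" unfolding S_delta_def by blast
  have "A \<subseteq> B" using gen_least[OF B(1)] B(5) gen by auto
  obtain m0 where m0: "m0 \<in> ?M" "h m0 = ?n" using alg_h_max by blast
  have m0A: "m0 \<in> A" using m0 M_A by auto
  have "?n \<noteq> 0" using h0[OF m0A] M_nz[OF m0(1)] m0 by simp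
  then have "k \<noteq> 0" using B(2) by auto
  then have "k \<ge> 2" using B(3) by simp
  then have n2: "?n \<ge> 2" using B(2) \<open>?n \<noteq> 0\<close> by (meson dvd_imp_le le_trans not_gr0)
  define T where "T = {y \<in> A. y \<noteq> z \<and> y \<ominus> m0 = z}"
  have fT: "finite T" unfolding T_def using fin by auto
  have m0T: "m0 \<in> T" unfolding T_def using m0A M_nz[OF m0(1)] by simp
  have "Min (h ` T) \<in> h ` T" using fT m0T by (intro Min_in) auto
  then obtain a where aT: "a \<in> T" and ha: "h a = Min (h ` T)" by auto
  have amin: "h a \<le> h y" if "y \<in> T" for y using fT that ha by simp
  have aA: "a \<in> A" "a \<noteq> z" "a \<ominus> m0 = z" using aT unfolding T_def by auto
  have Da: "D a = {z, a}"
  proof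
    show "{z, a} \<subseteq> D a" using xD zD aA by auto
    show "D a \<subseteq> {z, a}"
    proof
      fix t assume t: "t \<in> D a"
      then have tA: "t \<in> A" "t \<ominus> a = z" unfolding D_def by auto
      show "t \<in> {z, a}"
      proof (rule ccontr)
        assume "t \<notin> {z, a}"
        then have "t \<in> T" unfolding T_def using tA ltrans[OF tA(1) aA(1) m0A tA(2) aA(3)] by auto
        then have "h a \<le> h t" by (rule amin)
        moreover have "h t < h a" using h_lt[OF aA(1) tA] \<open>t \<notin> {z, a}\<close> by auto
        ultimately show False by simp
      qed
    qed
  qed
  have ha1: "h a = 1" unfolding hD Da using aA(2) by simp
  have "a \<in> B" using \<open>A \<subseteq> B\<close> aA by auto
  moreover have "a \<notin> level_set A (\<ominus>) z k" unfolding level_set_def using ha1 B(3) by auto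
  moreover have "a \<notin> ?M"
  proof
    assume "a \<in> ?M"
    then have "m0 = a" using M_max aA m0A by blast
    then show False using ha1 m0(2) n2 by simp
  qed
  ultimately show False using B(5) by simp
qed

end

theorem mainTheorem5:
  fixes A :: "'a set" and f :: "'a \<Rightarrow> 'a \<Rightarrow> 'a" and z :: 'a
  assumes "finite A"
    and "cbck_algebra A f z"
    and "subdirectly_irreducible A f"
    and "\<not> is_chain_alg A f z"
  shows "(generates A f z (maximal_elems A f z) \<and>
          (\<forall>G. generates A f z G \<longrightarrow> maximal_elems A f z \<subseteq> G))
         \<longleftrightarrow> S_delta A f z = {}"
proof -
  interpret fsi A f z
    using assms by (intro fsi.intro si.intro cb.intro fsi_axioms.intro si_axioms.intro)
  have MA: "maximal_elems A f z \<subseteq> A" using M_A .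
  show ?thesis
  proof
    assume "generates A f z (maximal_elems A f z) \<and>
          (\<forall>G. generates A f z G \<longrightarrow> maximal_elems A f z \<subseteq> G)"
    then show "S_delta A f z = {}" using dir1 unfolding generates_def by blast
  next
    assume "S_delta A f z = {}"
    then show "generates A f z (maximal_elems A f z) \<and>
          (\<forall>G. generates A f z G \<longrightarrow> maximal_elems A f z \<subseteq> G)"
      using dir2[OF _ assms(4)] dir2b MA unfolding generates_def by blast
  qed
qed

end
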